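(* Let $A=T_n\langle S;T\rangle$ be a Boolean Toeplitz matrix, with $S,T$ nonempty subsets of $\{1,\dots,n-1\}$, such that $\max S+\min T\le n$ and $\min S+\max T\le n$. Then there exists a positive integer $M$ such that for every integer $m>M$, the Boolean power $A^m$ is a Toeplitz matrix.
   Context: Boolean arithmetic on $\{0,1\}$: $1+1=1$. $T_n\langle S;T\rangle$ is the $n\times n$ $(0,1)$-matrix whose $(i,j)$-entry is $1$ iff $j-i\in S$ or $i-j\in T$. A matrix $(c_{ij})$ is Toeplitz if $c_{ij}$ depends only on $j-i$. *)

theory Defs
  imports Main
begin

text \<open>n x n Boolean matrices, indices 0..n-1 (shifted from the paper's 1..n;
  differences j - i are unchanged), represented as nat => nat => bool.\<close>

definition toep :: "nat \<Rightarrow> nat set \<Rightarrow> nat set \<Rightarrow> nat \<Rightarrow> nat \<Rightarrow> bool" where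
  "toep n S T i j = ((i \<le> j \<and> j - i \<in> S) \<or> (j \<le> i \<and> i - j \<in> T))"

definition bmult :: "nat \<Rightarrow> (nat \<Rightarrow> nat \<Rightarrow> bool) \<Rightarrow> (nat \<Rightarrow> nat \<Rightarrow> bool) \<Rightarrow> nat \<Rightarrow> nat \<Rightarrow> bool" where
  "bmult n A B i j = (\<exists>k<n. A i k \<and> B k j)"

fun bpow :: "nat \<Rightarrow> (nat \<Rightarrow> nat \<Rightarrow> bool) \<Rightarrow> nat \<Rightarrow> nat \<Rightarrow> nat \<Rightarrow> bool" where
  "bpow n A 0 = (\<lambda>i j. i = j)"
| "bpow n A (Suc m) = bmult n (bpow n A m) A"

definition is_toeplitz :: "nat \<Rightarrow> (nat \<Rightarrow> nat \<Rightarrow> bool) \<Rightarrow> bool" where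
  "is_toeplitz n C = (\<forall>i j i' j'. i < n \<and> j < n \<and> i' < n \<and> j' < n \<and>
      int j - int i = int j' - int i' \<longrightarrow> C i j = C i' j')"

end

theory Submission
  imports Defs
begin

lemma bpow_comp:
  "bpow n A m1 i k \<Longrightarrow> k < n \<Longrightarrow> bpow n A m2 k j \<Longrightarrow> bpow n A (m1+m2) i j"
proof (induction m2 arbitrary: j)
  case 0 then show ?case by simp
next
  case (Suc m2)
  from Suc.prems(3) obtain k' where "k' < n" "bpow n A m2 k k'" "A k' j"
    by (auto simp: bmult_def)
  with Suc.IH[of k'] Suc.prems show ?case by (auto simp: bmult_def)
qed

lemma bpow_one: "i < n \<Longrightarrow> A i j \<Longrightarrow> bpow n A 1 i j"
  by (simp add: bmult_def)

lemma bpow_step: "i < n \<Longrightarrow> A i z \<Longrightarrow> z < n \<Longrightarrow> bpow n A m z j \<Longrightarrow> bpow n A (Suc m) i j"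
  using bpow_comp[of n A 1 i z m j] bpow_one[of i n A z] by simp

lemma sum_list_concat_int: "sum_list (concat xss) = sum_list (map sum_list (xss :: int list list))"
  by (induction xss) auto

lemma delta_sum: "finite X \<Longrightarrow> s \<in> X \<Longrightarrow>
  (\<Sum>x\<in>X. (u x + (if x = s then 1 else 0)) * (f x :: int)) = (\<Sum>x\<in>X. u x * f x) + f s"
proof -
  assume X: "finite X" "s \<in> X"
  have "(\<Sum>x\<in>X. (u x + (if x = s then 1 else 0)) * f x) = (\<Sum>x\<in>X. u x * f x + (if x = s then f x else 0))"
    by (rule sum.cong) (auto simp: algebra_simps)
  also have "\<dots> = (\<Sum>x\<in>X. u x * f x) + (\<Sum>x\<in>X. (if x = s then f x else 0))"
    by (rule sum.distrib)
  also have "(\<Sum>x\<in>X. (if x = s then f x else 0)) = f s" using X by (simp add: sum.delta)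
  finally show ?thesis .
qed

locale tp =
  fixes n :: nat and S T :: "nat set"
  assumes Sne: "S \<noteq> {}" and Tne: "T \<noteq> {}"
    and Ssub: "S \<subseteq> {1..n-1}" and Tsub: "T \<subseteq> {1..n-1}"
    and c1: "Max S + Min T \<le> n" and c2: "Min S + Max T \<le> n"
begin

definition a where "a = Min S"
definition b where "b = Min T"

lemma finS: "finite S" using Ssub finite_subset by blast
lemma finT: "finite T" using Tsub finite_subset by blast
lemma a_in: "a \<in> S" using finS Sne a_def by simp
lemma b_in: "b \<in> T" using finT Tne b_def by simp
lemma a_pos: "1 \<le> a" using a_in Ssub by auto
lemma b_pos: "1 \<le> b" using b_in Tsub by auto
lemma sb: "s \<in> S \<Longrightarrow> s + b \<le> n" using c1 finS b_def Max_ge[OF finS, of s] by linarith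
lemma at: "t \<in> T \<Longrightarrow> a + t \<le> n" using c2 finT a_def Max_ge[OF finT, of t] by linarith
lemma s_lt: "s \<in> S \<Longrightarrow> s < n" using Ssub by force
lemma t_lt: "t \<in> T \<Longrightarrow> t < n" using Tsub by force
lemma s_ge: "s \<in> S \<Longrightarrow> a \<le> s" using a_def finS by simp
lemma ab_le: "a + b \<le> n" using at b_in .

abbreviation "A \<equiv> toep n S T"

lemma up: "x + s < n \<Longrightarrow> s \<in> S \<Longrightarrow> A x (x + s)"
  by (simp add: toep_def)
lemma down: "t \<le> x \<Longrightarrow> t \<in> T \<Longrightarrow> A x (x - t)"
  by (simp add: toep_def)

lemma ab_aux: "\<forall>x p q. p + q = k \<longrightarrow> x < n \<longrightarrow> y < n \<longrightarrow>
   int y = int x + int p * int a - int q * int b \<longrightarrow> bpow n A k x y"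
proof (induction k)
  case 0 then show ?case by auto
next
  case (Suc k)
  show ?case
  proof (intro allI impI)
    fix x p q assume pq: "p + q = Suc k" and x: "x < n" and y: "y < n"
      and e: "int y = int x + int p * int a - int q * int b"
    have downcase: "bpow n A (Suc k) x y" if "b \<le> x" "q > 0"
    proof -
      have "int y = int (x - b) + int p * int a - int (q - 1) * int b"
        using e that by (simp add: of_nat_diff algebra_simps)
      then have "bpow n A k (x - b) y" using Suc.IH[rule_format, of p "q - 1" "x - b"] pq that x y by simp
      then show ?thesis using bpow_step[of x n A "x - b" k y] down[OF that(1) b_in] x by simp
    qed
    have upcase: "bpow n A (Suc k) x y" if "x + a < n" "p > 0"
    proof -
      have "int y = int (x + a) + int (p - 1) * int a - int q * int b"
        using e that by (simp add: of_nat_diff algebra_simps)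
      then have "bpow n A k (x + a) y" using Suc.IH[rule_format, of "p - 1" q "x + a"] pq that x y by simp
      then show ?thesis using bpow_step[of x n A "x + a" k y] up[OF that(1) a_in] x that by simp
    qed
    show "bpow n A (Suc k) x y"
    proof (cases "q = 0")
      case True
      then have "p > 0" using pq by simp
      have "int p * int a \<ge> int a" using \<open>p > 0\<close> by (simp add: mult_le_cancel_right1)
      moreover have "int y = int x + int p * int a" using e True by simp
      ultimately have "x + a < n" using y by linarith
      then show ?thesis using upcase \<open>p>0\<close> by simp
    next
      case False
      show ?thesis
      proof (cases "p = 0")
        case True
        have "int q * int b \<ge> int b" using False by (simp add: mult_le_cancel_right1)
        moreover have "int y = int x - int q * int b" using e True by simp
        ultimately have "b \<le> x" by linarith
        then show ?thesis using downcase False by simp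
      next
        case pF: False
        show ?thesis
        proof (cases "b \<le> x")
          case True then show ?thesis using downcase False by simp
        next
          case False then show ?thesis using upcase pF ab_le by simp
        qed
      qed
    qed
  qed
qed

lemma ab: "x < n \<Longrightarrow> y < n \<Longrightarrow> int y = int x + int p * int a - int q * int b \<Longrightarrow> bpow n A (p+q) x y"
  using ab_aux by blast

lemma descend: "x < n \<Longrightarrow> s \<in> S \<Longrightarrow> \<exists>k. k * b \<le> x \<and> x - k*b + s < n \<and> bpow n A k x (x - k*b)"
proof (induction x rule: less_induct)
  case (less x)
  show ?case
  proof (cases "x + s < n")
    case True
    then show ?thesis by (intro exI[of _ 0]) simp
  next
    case False
    then have bx: "b \<le> x" using sb[OF less.prems(2)] by linarith
    then have "x - b < x" using b_pos by linarith
    moreover have "x - b < n" using less.prems(1) by linarith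
    ultimately obtain k where
      k: "k * b \<le> x - b" "x - b - k*b + s < n" "bpow n A k (x - b) (x - b - k*b)"
      using less.IH[of "x - b"] less.prems(2) by blast
    have eq: "x - b - k*b = x - Suc k * b" by simp
    have "bpow n A (Suc k) x (x - b - k*b)"
      using bpow_step[OF less.prems(1) down[OF bx b_in] _ k(3)] less.prems(1) by simp
    moreover have "Suc k * b \<le> x" using k(1) bx by simp
    moreover have "x - Suc k * b + s < n" using k(2) eq by simp
    ultimately show ?thesis using eq by (intro exI[of _ "Suc k"]) simp
  qed
qed

lemma ascend_aux: "\<forall>x. n - x = d \<longrightarrow> x < n \<longrightarrow> t \<in> T \<longrightarrow> (\<exists>k. x + k*a < n \<and> t \<le> x + k*a \<and> bpow n A k x (x + k*a))"
proof (induction d rule: less_induct)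
  case (less d)
  show ?case
  proof (intro allI impI)
    fix x assume d: "n - x = d" and x: "x < n" and t: "t \<in> T"
    show "\<exists>k. x + k*a < n \<and> t \<le> x + k*a \<and> bpow n A k x (x + k*a)"
    proof (cases "t \<le> x")
      case True then show ?thesis using x by (intro exI[of _ 0]) simp
    next
      case False
      then have xa: "x + a < n" using at[OF t] by linarith
      have "n - (x + a) < d" using d a_pos xa by linarith
      from less.IH[OF this, rule_format, OF refl xa t] obtain k where
        k: "x + a + k*a < n" "t \<le> x + a + k*a" "bpow n A k (x + a) (x + a + k*a)" by auto
      have "bpow n A (Suc k) x (x + a + k*a)"
        using bpow_step[OF x up[OF xa a_in] xa k(3)] .
      then show ?thesis using k by (intro exI[of _ "Suc k"]) (simp add: add.assoc)
    qed
  qed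
qed

lemma ascend: "x < n \<Longrightarrow> t \<in> T \<Longrightarrow> \<exists>k. x + k*a < n \<and> t \<le> x + k*a \<and> bpow n A k x (x + k*a)"
  using ascend_aux by blast

definition okstep :: "int \<Rightarrow> bool" where
  "okstep e = ((0 < e \<and> nat e \<in> S) \<or> (e < 0 \<and> nat (-e) \<in> T))"

lemma big: "(\<forall>e\<in>set L. okstep e) \<Longrightarrow> x < n \<Longrightarrow> y < n \<Longrightarrow> n * length L \<le> p \<Longrightarrow> n * length L \<le> q \<Longrightarrow>
  int y = int x + sum_list L + int p * int a - int q * int b \<Longrightarrow> bpow n A (length L + p + q) x y"
proof (induction L arbitrary: x p q)
  case Nil then show ?case using ab by simp
next
  case (Cons e L)
  have oe: "okstep e" and oL: "\<forall>e\<in>set L. okstep e" using Cons.prems(1) by auto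
  show ?case
  proof (cases "0 < e")
    case True
    define s where "s = nat e"
    have s: "s \<in> S" "int s = e" using oe True unfolding okstep_def s_def by auto
    obtain k where k: "k * b \<le> x" "x - k*b + s < n" "bpow n A k x (x - k*b)"
      using descend[OF Cons.prems(2) s(1)] by blast
    have kx: "k \<le> x" using k(1) b_pos
      by (metis dual_order.trans mult_le_cancel1 nat_mult_1_right)
    have kq: "k \<le> q" "n * length L \<le> q - k" using kx Cons.prems(2,5) by auto
    define x1 where "x1 = x - k*b"
    have st: "bpow n A 1 x1 (x1 + s)" using bpow_one[of x1 n A "x1+s"] up[of x1 s] k(2) s(1) x1_def by simp
    have b1: "bpow n A (k + 1) x (x1 + s)"
      using bpow_comp[OF k(3)[folded x1_def] _ st] k(2) x1_def by simp
    have "int y = int (x1 + s) + sum_list L + int p * int a - int (q - k) * int b"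
      using Cons.prems(6) k(1) kq s(2) unfolding x1_def by (simp add: of_nat_diff algebra_simps)
    then have b2: "bpow n A (length L + p + (q - k)) (x1 + s) y"
      using Cons.IH[OF oL _ Cons.prems(3) _ kq(2)] Cons.prems(4) k(2) x1_def by simp
    have "bpow n A (k + 1 + (length L + p + (q - k))) x y"
      using bpow_comp[OF b1 _ b2] k(2) x1_def by simp
    then show ?thesis using kq by simp
  next
    case False
    then have e0: "e < 0" using oe unfolding okstep_def by auto
    define t where "t = nat (-e)"
    have t: "t \<in> T" "int t = -e" using oe e0 unfolding okstep_def t_def by auto
    obtain k where k: "x + k*a < n" "t \<le> x + k*a" "bpow n A k x (x + k*a)"
      using ascend[OF Cons.prems(2) t(1)] by blast
    have kx: "k < n" using k(1) a_pos
      by (metis add_lessD1 dual_order.strict_trans2 le_add2 mult.commute mult_le_mono1 nat_mult_1 order.trans)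
    have kq: "k \<le> p" "n * length L \<le> p - k" using kx Cons.prems(4) by auto
    define x1 where "x1 = x + k*a"
    have st: "bpow n A 1 x1 (x1 - t)" using bpow_one[of x1 n A "x1-t"] down[of t x1] k t(1) x1_def by simp
    have b1: "bpow n A (k + 1) x (x1 - t)"
      using bpow_comp[OF k(3)[folded x1_def] _ st] k(1) x1_def by simp
    have "int y = int (x1 - t) + sum_list L + int (p - k) * int a - int q * int b"
      using Cons.prems(6) k(2) kq t(2) unfolding x1_def by (simp add: of_nat_diff algebra_simps)
    then have b2: "bpow n A (length L + (p - k) + q) (x1 - t) y"
      using Cons.IH[OF oL _ Cons.prems(3) kq(2)] Cons.prems(5) k(1) x1_def by simp
    have "bpow n A (k + 1 + (length L + (p - k) + q)) x y"
      using bpow_comp[OF b1 _ b2] k(1) x1_def by simp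
    then show ?thesis using kq by simp
  qed
qed

definition Pm :: "nat \<Rightarrow> int \<Rightarrow> bool" where
  "Pm m d = (\<exists>u v. d - int m * int a = (\<Sum>s\<in>S. u s * (int s - int a)) - (\<Sum>t\<in>T. v t * (int t + int a)))"

lemma inv: "i < n \<Longrightarrow> bpow n A m i j \<Longrightarrow> Pm m (int j - int i)"
proof (induction m arbitrary: j)
  case 0 then show ?case unfolding Pm_def by (intro exI[of _ "\<lambda>_. 0"]) simp
next
  case (Suc m)
  from Suc.prems(2) obtain k where k: "k < n" "bpow n A m i k" "A k j" by (auto simp: bmult_def)
  from Suc.IH[OF Suc.prems(1) k(2)] obtain u v where
    uv: "int k - int i - int m * int a = (\<Sum>s\<in>S. u s * (int s - int a)) - (\<Sum>t\<in>T. v t * (int t + int a))"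
    unfolding Pm_def by blast
  from k(3) consider "k \<le> j" "j - k \<in> S" | "j \<le> k" "k - j \<in> T" unfolding toep_def by blast
  then show ?case
  proof cases
    case 1
    define s where "s = j - k"
    have "(\<Sum>x\<in>S. (u x + (if x = s then 1 else 0)) * (int x - int a)) = (\<Sum>x\<in>S. u x * (int x - int a)) + (int s - int a)"
      using delta_sum[OF finS, of s u "\<lambda>x. int x - int a"] 1 s_def by simp
    moreover have "int j - int i - int (Suc m) * int a = (int k - int i - int m * int a) + (int s - int a)"
      using 1 s_def by (simp add: algebra_simps)
    ultimately show ?thesis unfolding Pm_def using uv
      by (intro exI[of _ "\<lambda>x. u x + (if x = s then 1 else 0)"] exI[of _ v]) linarith
  next
    case 2
    define t where "t = k - j"
    have "(\<Sum>x\<in>T. (v x + (if x = t then 1 else 0)) * (int x + int a)) = (\<Sum>x\<in>T. v x * (int x + int a)) + (int t + int a)"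
      using delta_sum[OF finT, of t v "\<lambda>x. int x + int a"] 2 t_def by simp
    moreover have "int j - int i - int (Suc m) * int a = (int k - int i - int m * int a) - (int t + int a)"
      using 2 t_def by (simp add: algebra_simps)
    ultimately show ?thesis unfolding Pm_def using uv
      by (intro exI[of _ u] exI[of _ "\<lambda>x. v x + (if x = t then 1 else 0)"]) linarith
  qed
qed

definition hh :: int where "hh = int a + int b"
definition Kb :: int where "Kb = (\<Sum>s\<in>S. hh) + (\<Sum>t\<in>T. hh)"
definition Rb :: int where "Rb = (\<Sum>s\<in>S. hh * (int s - int a)) + (\<Sum>t\<in>T. hh * (int t + int a))"
definition Mb :: nat where "Mb = nat (int n * Kb * hh + Kb * hh + Rb + int n + 1)"

lemma hh_pos: "hh > 0" using a_pos b_pos hh_def by simp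
lemma Kb_nn: "Kb \<ge> 0" using hh_pos unfolding Kb_def by (simp add: sum_nonneg)
lemma Rb_nn: "Rb \<ge> 0" using hh_pos s_ge unfolding Rb_def
  by (intro add_nonneg_nonneg sum_nonneg) auto

lemma Mb_pos: "Mb > 0"
proof -
  have "int n * Kb * hh \<ge> 0" using Kb_nn hh_pos by simp
  moreover have "Kb * hh \<ge> 0" using Kb_nn hh_pos by simp
  ultimately show ?thesis unfolding Mb_def using Rb_nn by simp
qed

lemma decomp:
  fixes u :: "nat \<Rightarrow> int" and G :: "nat \<Rightarrow> int"
  shows "(\<Sum>x\<in>X. u x * G x) = hh * (\<Sum>x\<in>X. (u x div hh) * G x) + (\<Sum>x\<in>X. (u x mod hh) * G x)"
proof -
  have "(\<Sum>x\<in>X. u x * G x) = (\<Sum>x\<in>X. hh * ((u x div hh) * G x) + (u x mod hh) * G x)"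
  proof (rule sum.cong)
    fix x show "u x * G x = hh * ((u x div hh) * G x) + (u x mod hh) * G x"
      by (metis distrib_right mult.assoc mult_div_mod_eq)
  qed simp
  also have "\<dots> = hh * (\<Sum>x\<in>X. (u x div hh) * G x) + (\<Sum>x\<in>X. (u x mod hh) * G x)"
    by (simp add: sum.distrib sum_distrib_left)
  finally show ?thesis .
qed

lemma realize:
  assumes ij: "i < n" "j < n" and mM: "Mb \<le> m" and P: "Pm m (int j - int i)"
  shows "bpow n A m i j"
proof -
  obtain u v where uv: "int j - int i - int m * int a = (\<Sum>s\<in>S. u s * (int s - int a)) - (\<Sum>t\<in>T. v t * (int t + int a))"
    using P unfolding Pm_def by blast
  define cu where "cu s = u s mod hh" for s
  define cv where "cv t = v t mod hh" for t
  have cu: "0 \<le> cu s" "cu s \<le> hh" for s using hh_pos unfolding cu_def by (simp_all add: less_imp_le)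
  have cv: "0 \<le> cv t" "cv t \<le> hh" for t using hh_pos unfolding cv_def by (simp_all add: less_imp_le)
  define L1 where "L1 = concat (map (\<lambda>s. replicate (nat (cu s)) (int s)) (sorted_list_of_set S))"
  define L2 where "L2 = concat (map (\<lambda>t. replicate (nat (cv t)) (- int t)) (sorted_list_of_set T))"
  define L where "L = L1 @ L2"
  have sL1: "sum_list L1 = (\<Sum>s\<in>S. cu s * int s)"
    unfolding L1_def sum_list_concat_int using cu finS
    by (simp add: sum_list_distinct_conv_sum_set o_def sum_list_replicate)
  have sL2: "sum_list L2 = - (\<Sum>t\<in>T. cv t * int t)"
    unfolding L2_def sum_list_concat_int using cv finT
    by (simp add: sum_list_distinct_conv_sum_set o_def sum_list_replicate sum_negf)
  have lL1: "int (length L1) = (\<Sum>s\<in>S. cu s)"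
    unfolding L1_def length_concat using cu finS
    by (simp add: sum_list_distinct_conv_sum_set o_def)
  have lL2: "int (length L2) = (\<Sum>t\<in>T. cv t)"
    unfolding L2_def length_concat using cv finT
    by (simp add: sum_list_distinct_conv_sum_set o_def)
  have okL: "\<forall>e\<in>set L. okstep e"
    unfolding L_def L1_def L2_def okstep_def using finS finT Ssub Tsub by auto
  have lenK: "int (length L) \<le> Kb"
  proof -
    have "(\<Sum>s\<in>S. cu s) \<le> (\<Sum>s\<in>S. hh)" by (rule sum_mono) (use cu in auto)
    moreover have "(\<Sum>t\<in>T. cv t) \<le> (\<Sum>t\<in>T. hh)" by (rule sum_mono) (use cv in auto)
    ultimately show ?thesis unfolding L_def Kb_def using lL1 lL2 by simp
  qed
  define r where "r = (\<Sum>s\<in>S. cu s * (int s - int a)) - (\<Sum>t\<in>T. cv t * (int t + int a))"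
  have r1: "0 \<le> (\<Sum>s\<in>S. cu s * (int s - int a))" using cu s_ge by (intro sum_nonneg) auto
  have r2: "(\<Sum>s\<in>S. cu s * (int s - int a)) \<le> (\<Sum>s\<in>S. hh * (int s - int a))"
    using cu s_ge by (intro sum_mono mult_right_mono) auto
  have r3: "0 \<le> (\<Sum>t\<in>T. cv t * (int t + int a))" using cv by (intro sum_nonneg) auto
  have r4: "(\<Sum>t\<in>T. cv t * (int t + int a)) \<le> (\<Sum>t\<in>T. hh * (int t + int a))"
    using cv by (intro sum_mono mult_right_mono) auto
  have rR: "- Rb \<le> r" "r \<le> Rb" using r1 r2 r3 r4 unfolding r_def Rb_def by linarith+
  have sumL: "sum_list L = r + int a * int (length L)"
  proof -
    have "(\<Sum>s\<in>S. cu s * (int s - int a)) = (\<Sum>s\<in>S. cu s * int s) - int a * (\<Sum>s\<in>S. cu s)"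
      by (simp add: algebra_simps sum_subtractf sum_distrib_left sum_distrib_right)
    moreover have "(\<Sum>t\<in>T. cv t * (int t + int a)) = (\<Sum>t\<in>T. cv t * int t) + int a * (\<Sum>t\<in>T. cv t)"
      by (simp add: algebra_simps sum.distrib sum_distrib_left sum_distrib_right)
    ultimately show ?thesis unfolding r_def L_def using sL1 sL2 lL1 lL2 by (simp add: algebra_simps)
  qed
  define Q where "Q = (\<Sum>s\<in>S. (u s div hh) * (int s - int a)) - (\<Sum>t\<in>T. (v t div hh) * (int t + int a))"
  have tQ: "int j - int i - int m * int a = hh * Q + r"
    using uv decomp[of u "\<lambda>s. int s - int a" S] decomp[of v "\<lambda>t. int t + int a" T]
    unfolding Q_def r_def cu_def cv_def by (simp add: algebra_simps)
  define N where "N = - Q"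
  define P where "P = int m - int (length L) - N"
  have ma: "int m * int a \<ge> int m" using a_pos by (simp add: mult_le_cancel_left1)
  have mb: "int m * int b \<ge> int m" using b_pos by (simp add: mult_le_cancel_left1)
  have mM': "int m \<ge> int n * Kb * hh + Kb * hh + Rb + int n + 1" using mM unfolding Mb_def by simp
  have KL: "int n * int (length L) \<le> int n * Kb" using lenK by (simp add: mult_left_mono)
  have Nh: "N * hh = r - (int j - int i) + int m * int a" using tQ unfolding N_def by (simp add: algebra_simps)
  have "N * hh \<ge> (int n * Kb) * hh" using Nh ma mM' rR ij Kb_nn hh_pos
  proof -
    have "Kb * hh \<ge> 0" using Kb_nn hh_pos by simp
    then show ?thesis using Nh ma mM' rR ij by linarith
  qed
  then have NK: "N \<ge> int n * Kb" using hh_pos by simp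
  have Ph: "P * hh = int m * int b - int (length L) * hh - r + (int j - int i)"
    unfolding P_def using Nh hh_def by (simp add: algebra_simps)
  have LK: "int (length L) * hh \<le> Kb * hh" using lenK hh_pos by simp
  have "P * hh \<ge> (int n * Kb) * hh" using Ph mb mM' rR ij LK by linarith
  then have PK: "P \<ge> int n * Kb" using hh_pos by simp
  have nK: "int n * Kb \<ge> 0" using Kb_nn by simp
  have N0: "N \<ge> 0" "P \<ge> 0" using NK PK nK by linarith+
  have eqm: "length L + nat P + nat N = m" using N0 unfolding P_def by linarith
  have y: "int j = int i + sum_list L + int (nat P) * int a - int (nat N) * int b"
  proof -
    have "int i + sum_list L + P * int a - N * int b = int i + r + int m * int a - N * hh"
      unfolding sumL P_def hh_def by (simp add: algebra_simps)
    then show ?thesis using Nh N0 by simp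
  qed
  have "bpow n A (length L + nat P + nat N) i j"
  proof (rule big[OF okL ij])
    have "int (n * length L) \<le> P" using PK KL by simp
    then show "n * length L \<le> nat P" by (metis nat_int nat_mono)
    have "int (n * length L) \<le> N" using NK KL by simp
    then show "n * length L \<le> nat N" by (metis nat_int nat_mono)
  qed (use y in simp)
  then show ?thesis using eqm by simp
qed

end

theorem theorem2p10:
  fixes n :: nat and S T :: "nat set"
  assumes "S \<noteq> {}" and "T \<noteq> {}"
    and "S \<subseteq> {1..n-1}" and "T \<subseteq> {1..n-1}"
    and "Max S + Min T \<le> n" and "Min S + Max T \<le> n"
  shows "\<exists>M::nat. M > 0 \<and> (\<forall>m>M. is_toeplitz n (bpow n (toep n S T) m))"
proof -
  interpret tp n S T using assms by unfold_locales
  have "\<forall>m>Mb. is_toeplitz n (bpow n (toep n S T) m)"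
  proof (intro allI impI)
    fix m assume m: "Mb < m"
    have key: "bpow n A m i j = Pm m (int j - int i)" if "i < n" "j < n" for i j
      using inv[OF that(1)] realize[OF that] m by auto
    show "is_toeplitz n (bpow n (toep n S T) m)"
      unfolding is_toeplitz_def using key by metis
  qed
  then show ?thesis using Mb_pos by blast
qed

end
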